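(* Let $n_b\ge 1$, $d_l\ge 3$, $L\ge 3$, $M\ge 1$ be integers, and let $H$ be a quasi-cyclic SC-LDPC parity-check matrix with parameters $(n_b,d_l,L,M)$ and reuse $T=1$ (as defined in the context). Then, for every choice of the shift values $p_{x,y}$ satisfying the reuse-$1$ condition, the Tanner graph of $H$ contains a cycle of length $6$; in particular its girth is at most $6$.
   Context: Quasi-cyclic SC-LDPC matrix: fix integers $n_b\ge1$ (bit nodes per protograph; one check node per protograph), $d_l\ge 2$, $L\ge1$, $M\ge1$. $H$ is a binary block matrix with $L+d_l-1$ block rows (indexed $x=1,\dots,L+d_l-1$) and $n_bL$ block columns (indexed $y=1,\dots,n_bL$), each block of size $M\times M$. For a block column $y$ put $t(y)=\lceil y/n_b\rceil$. Block $(x,y)$ is the all-zero matrix unless $t(y)\le x\le t(y)+d_l-1$, in which case it equals the circulant permutation matrix $I_{(p_{x,y})}$ for a shift value $p_{x,y}\in\{0,\dots,M-1\}$; here $I_{(p)}$ is the $M\times M$ matrix whose row $r$ ($0\le r\le M-1$) has a single $1$, in column $(r+p)\bmod M$, and zeros elsewhere. Reuse-$T$ condition (periodic time-variant construction with period $T$): $p_{x+T,\,y+Tn_b}=p_{x,y}$ whenever both $(x,y)$ and $(x+T,y+Tn_b)$ are nonzero blocks of $H$; otherwise the shift values are arbitrary. The Tanner graph of $H$ is the bipartite graph with one bit node per column and one check node per row of $H$, a bit node and check node being adjacent iff the corresponding entry of $H$ is $1$. The girth is the length of a shortest cycle in the Tanner graph. *)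

theory Defs
  imports Main "HOL-Library.Extended_Nat"
begin

text \<open>Block column y (1-based) belongs to time t(y) = ceiling(y / n_b).\<close>
definition tblk :: "nat \<Rightarrow> nat \<Rightarrow> nat" where
  "tblk nb y = (y + nb - 1) div nb"

definition nz_block :: "nat \<Rightarrow> nat \<Rightarrow> nat \<Rightarrow> nat \<Rightarrow> nat \<Rightarrow> bool" where
  "nz_block nb dl L x y \<longleftrightarrow>
     1 \<le> x \<and> x \<le> L + dl - 1 \<and> 1 \<le> y \<and> y \<le> nb * L \<and>
     tblk nb y \<le> x \<and> x \<le> tblk nb y + dl - 1"

definition valid_shifts :: "nat \<Rightarrow> nat \<Rightarrow> nat \<Rightarrow> nat \<Rightarrow> (nat \<Rightarrow> nat \<Rightarrow> nat) \<Rightarrow> bool" where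
  "valid_shifts nb dl L M p \<longleftrightarrow> (\<forall>x y. nz_block nb dl L x y \<longrightarrow> p x y < M)"

definition reuse_cond :: "nat \<Rightarrow> nat \<Rightarrow> nat \<Rightarrow> nat \<Rightarrow> (nat \<Rightarrow> nat \<Rightarrow> nat) \<Rightarrow> bool" where
  "reuse_cond nb dl L T p \<longleftrightarrow>
     (\<forall>x y. nz_block nb dl L x y \<and> nz_block nb dl L (x + T) (y + T * nb)
        \<longrightarrow> p (x + T) (y + T * nb) = p x y)"

text \<open>Entry of H: row (x,r) = row r of block row x, column (y,c) = column c of block column y
  (x,y 1-based, r,c in {0..M-1}). Entry is 1 iff the block is nonzero and c = (r + p x y) mod M.\<close>
definition H_entry :: "nat \<Rightarrow> nat \<Rightarrow> nat \<Rightarrow> nat \<Rightarrow> (nat \<Rightarrow> nat \<Rightarrow> nat)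
     \<Rightarrow> nat \<times> nat \<Rightarrow> nat \<times> nat \<Rightarrow> bool" where
  "H_entry nb dl L M p chk bn \<longleftrightarrow>
     (case chk of (x, r) \<Rightarrow> case bn of (y, c) \<Rightarrow>
        r < M \<and> c < M \<and> nz_block nb dl L x y \<and> c = (r + p x y) mod M)"

text \<open>A cycle of length 2k (k >= 2) in the bipartite Tanner graph given by the adjacency
  relation adj (check node, bit node): distinct check nodes cs!0..cs!(k-1), distinct bit nodes
  bs!0..bs!(k-1), with cs!i - bs!i - cs!((i+1) mod k).\<close>
definition tanner_cycle :: "('c \<Rightarrow> 'b \<Rightarrow> bool) \<Rightarrow> 'c list \<Rightarrow> 'b list \<Rightarrow> bool" where
  "tanner_cycle adj cs bs \<longleftrightarrow>
     length cs = length bs \<and> length cs \<ge> 2 \<and> distinct cs \<and> distinct bs \<and>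
     (\<forall>i < length cs. adj (cs ! i) (bs ! i) \<and> adj (cs ! ((i + 1) mod length cs)) (bs ! i))"

text \<open>Girth: length of a shortest cycle (infinity if acyclic).\<close>
definition girth :: "('c \<Rightarrow> 'b \<Rightarrow> bool) \<Rightarrow> enat" where
  "girth adj = (INF cb \<in> {(cs, bs). tanner_cycle adj cs bs}. enat (2 * length (fst cb)))"

end

theory Submission
  imports Defs
begin

lemma tb1: "nb \<ge> 1 \<Longrightarrow> tblk nb 1 = 1" by (simp add: tblk_def)
lemma tb2: "nb \<ge> 1 \<Longrightarrow> tblk nb (1+nb) = 2"
proof -
  assume "nb \<ge> 1" then have "1 + nb + nb - 1 = 2*nb" by simp
  then show ?thesis using \<open>nb \<ge> 1\<close> by (simp add: tblk_def)
qed
lemma tb3: "nb \<ge> 1 \<Longrightarrow> tblk nb (1+2*nb) = 3"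
proof -
  assume "nb \<ge> 1"
  then have "(1 + 2*nb + nb - 1) = 3*nb" by simp
  then show ?thesis using \<open>nb \<ge> 1\<close> by (simp add: tblk_def)
qed

theorem lemma1:
  fixes nb dl L M :: nat and p :: "nat \<Rightarrow> nat \<Rightarrow> nat"
  assumes "nb \<ge> 1" and "dl \<ge> 3" and "L \<ge> 3" and "M \<ge> 1"
    and "valid_shifts nb dl L M p"
    and "reuse_cond nb dl L 1 p"
  shows "(\<exists>cs bs. tanner_cycle (H_entry nb dl L M p) cs bs \<and> length cs = 3)
         \<and> girth (H_entry nb dl L M p) \<le> 6"
proof -
  have nb3: "1 + 2*nb \<le> nb * L" using assms(1,3)
  proof -
    have "nb * 3 \<le> nb * L" using assms(3) by simp
    then show ?thesis using assms(1) by linarith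
  qed
  have nb2: "1 + nb \<le> nb * L" using nb3 by linarith
  have nb1: "1 \<le> nb * L" using nb3 by linarith
  note tb = tb1[OF assms(1)] tb2[OF assms(1)] tb3[OF assms(1)]
  have z11: "nz_block nb dl L 1 1" "nz_block nb dl L 2 1" "nz_block nb dl L 3 1"
    using assms nb1 tb by (auto simp: nz_block_def)
  have z2: "nz_block nb dl L 2 (1+nb)" "nz_block nb dl L 3 (1+nb)" "nz_block nb dl L 4 (1+nb)"
    using assms nb2 tb by (auto simp: nz_block_def)
  have z3: "nz_block nb dl L 3 (1+2*nb)" "nz_block nb dl L 4 (1+2*nb)"
    using assms nb3 tb by (auto simp: nz_block_def)
  have R: "\<And>x y. nz_block nb dl L x y \<Longrightarrow> nz_block nb dl L (x+1) (y+nb) \<Longrightarrow> p (x+1) (y+nb) = p x y"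
    using assms(6) by (auto simp: reuse_cond_def)
  define a0 where "a0 = p 1 1"
  define a1 where "a1 = p 2 1"
  define a2 where "a2 = p 3 1"
  have lt: "a0 < M" "a1 < M" "a2 < M" using assms(5) z11 by (auto simp: valid_shifts_def a0_def a1_def a2_def)
  have p21: "p 2 (1+nb) = a0" using R[OF z11(1)] z2(1) by (simp add: a0_def add.commute eval_nat_numeral)
  have p31: "p 3 (1+nb) = a1" using R[OF z11(2)] z2(2) by (simp add: a1_def add.commute eval_nat_numeral)
  have p41: "p 4 (1+nb) = a2" using R[OF z11(3)] z2(3) by (simp add: a2_def add.commute eval_nat_numeral)
  have p32: "p 3 (1+2*nb) = a0" using R[OF z2(1)] z3(1) p21 by (simp add: add.commute add.left_commute mult_2 eval_nat_numeral)
  have p42: "p 4 (1+2*nb) = a1" using R[OF z2(2)] z3(2) p31 by (simp add: add.commute add.left_commute mult_2 eval_nat_numeral)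
  define r1 where "r1 = (a2 + M - a1) mod M"
  define r2 where "r2 = (a0 + M - a1) mod M"
  have r1M: "r1 < M" and r2M: "r2 < M" using assms(4) by (auto simp: r1_def r2_def)
  have e1: "(r1 + a1) mod M = a2"
  proof -
    have "(r1 + a1) mod M = (a2 + M - a1 + a1) mod M" by (simp add: r1_def mod_add_left_eq)
    also have "\<dots> = a2" using lt by simp
    finally show ?thesis .
  qed
  have e2: "(r2 + a1) mod M = a0"
  proof -
    have "(r2 + a1) mod M = (a0 + M - a1 + a1) mod M" by (simp add: r2_def mod_add_left_eq)
    also have "\<dots> = a0" using lt by simp
    finally show ?thesis .
  qed
  have e3: "(r2 + a2) mod M = (r1 + a0) mod M"
  proof -
    have "(r2 + a2) mod M = (a0 + M - a1 + a2) mod M" by (simp add: r2_def mod_add_left_eq)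
    also have "\<dots> = (a2 + M - a1 + a0) mod M" using lt by (simp add: algebra_simps)
    also have "\<dots> = (r1 + a0) mod M" by (simp add: r1_def mod_add_left_eq)
    finally show ?thesis .
  qed
  define cs where "cs = [(3::nat, 0::nat), (2, r1), (4, r2)]"
  define bs where "bs = [(1::nat, a2), (1+nb, (r1 + a0) mod M), (1+2*nb, a0)]"
  have "(r1 + a0) mod M < M" using assms(4) by simp
  have Hx: "\<And>x y r c. r < M \<Longrightarrow> c < M \<Longrightarrow> nz_block nb dl L x y \<Longrightarrow> c = (r + p x y) mod M
      \<Longrightarrow> H_entry nb dl L M p (x,r) (y,c)" by (simp add: H_entry_def)
  have M0: "0 < M" using assms(4) by simp
  have adj1: "H_entry nb dl L M p (3,0) (1,a2)"
    by (rule Hx[OF M0 lt(3) z11(3)]) (simp only: a2_def[symmetric] add_0 mod_less[OF lt(3)])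
  have adj2: "H_entry nb dl L M p (2,r1) (1,a2)"
    by (rule Hx[OF r1M lt(3) z11(2)]) (simp only: a1_def[symmetric] e1)
  have adj3: "H_entry nb dl L M p (2,r1) (1+nb, (r1 + a0) mod M)"
    by (rule Hx[OF r1M \<open>(r1 + a0) mod M < M\<close> z2(1)]) (simp only: p21)
  have adj4: "H_entry nb dl L M p (4,r2) (1+nb, (r1 + a0) mod M)"
    by (rule Hx[OF r2M \<open>(r1 + a0) mod M < M\<close> z2(3)]) (simp only: p41 e3)
  have adj5: "H_entry nb dl L M p (4,r2) (1+2*nb, a0)"
    by (rule Hx[OF r2M lt(1) z3(2)]) (simp only: p42 e2)
  have adj6: "H_entry nb dl L M p (3,0) (1+2*nb, a0)"
    by (rule Hx[OF M0 lt(1) z3(1)]) (simp only: p32 add_0 mod_less[OF lt(1)])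
  note adj = adj1 adj2 adj3 adj4 adj5 adj6
  have all: "\<forall>i < length cs. H_entry nb dl L M p (cs ! i) (bs ! i) \<and>
          H_entry nb dl L M p (cs ! ((i + 1) mod length cs)) (bs ! i)"
  proof (intro allI impI)
    fix i assume "i < length cs"
    then have "i = 0 \<or> i = 1 \<or> i = 2" by (auto simp: cs_def)
    then show "H_entry nb dl L M p (cs ! i) (bs ! i) \<and>
          H_entry nb dl L M p (cs ! ((i + 1) mod length cs)) (bs ! i)"
      using adj by (auto simp: cs_def bs_def)
  qed
  have dcs: "distinct cs" by (simp add: cs_def)
  have dbs: "distinct bs" using assms(1) by (simp add: bs_def)
  have tc: "tanner_cycle (H_entry nb dl L M p) cs bs"
    unfolding tanner_cycle_def using all dcs dbs by (simp add: cs_def bs_def)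
  have "girth (H_entry nb dl L M p) \<le> enat (2 * length (fst (cs, bs)))"
    unfolding girth_def by (rule INF_lower) (use tc in auto)
  then have "girth (H_entry nb dl L M p) \<le> 6" by (simp add: cs_def numeral_eq_enat)
  moreover have "length cs = 3" by (simp add: cs_def)
  ultimately show ?thesis using tc by blast
qed

end
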